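(* Let $a<b$, $\gamma>0$, $k\in\{1,2,3\}$ and $\phi\in\mathcal{C}^{k+1}[a,b]$. Define, using the operators of the context, \[ \phi_{1,1}=\phi,\quad \phi_{1,2}(x)=\mathcal{D}_L^{\,\phi'(a)/\gamma}[\phi_{1,1},\gamma](x)-\sum_{m=2}^{k}\left(-\frac1\gamma\right)^m\partial_x^m\phi(a)\,e^{-\gamma(x-a)}, \] \[ \phi_{1,3}(x)=\mathcal{D}_L^{\,0}[\phi_{1,2},\gamma](x)+\sum_{m=2}^{k}(m-1)\left(-\frac1\gamma\right)^m\partial_x^m\phi(a)\,e^{-\gamma(x-a)}, \] \[ \phi_{2,1}=\phi,\quad \phi_{2,2}(x)=\mathcal{D}_R^{\,-\phi'(b)/\gamma}[\phi_{2,1},\gamma](x)-\sum_{m=2}^{k}\left(\frac1\gamma\right)^m\partial_x^m\phi(b)\,e^{-\gamma(b-x)}, \] \[ \phi_{2,3}(x)=\mathcal{D}_R^{\,0}[\phi_{2,2},\gamma](x)+\sum_{m=2}^{k}(m-1)\left(\frac1\gamma\right)^m\partial_x^m\phi(b)\,e^{-\gamma(b-x)}, \] and the modified partial sums \[ \widetilde{\mathcal{P}}^L_k[\phi,\gamma]=\gamma\,\mathcal{D}_L^{\,\phi'(a)/\gamma}[\phi_{1,1},\gamma]+\gamma\sum_{p=2}^{k}\mathcal{D}_L^{\,0}[\phi_{1,p},\gamma]\ \ (k=1,2),\qquad \widetilde{\mathcal{P}}^L_3[\phi,\gamma]=\gamma\,\mathcal{D}_L^{\,\phi'(a)/\gamma}[\phi_{1,1},\gamma]+\gamma\sum_{p=2}^{3}\mathcal{D}_L^{\,0}[\phi_{1,p},\gamma]-\gamma\,\mathcal{D}_0^{\,0,0}[\phi_{1,3},\gamma],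 \] \[ \widetilde{\mathcal{P}}^R_k[\phi,\gamma]=-\gamma\,\mathcal{D}_R^{\,-\phi'(b)/\gamma}[\phi_{2,1},\gamma]-\gamma\sum_{p=2}^{k}\mathcal{D}_R^{\,0}[\phi_{2,p},\gamma]\ \ (k=1,2),\qquad \widetilde{\mathcal{P}}^R_3[\phi,\gamma]=-\gamma\,\mathcal{D}_R^{\,-\phi'(b)/\gamma}[\phi_{2,1},\gamma]-\gamma\sum_{p=2}^{3}\mathcal{D}_R^{\,0}[\phi_{2,p},\gamma]+\gamma\,\mathcal{D}_0^{\,0,0}[\phi_{2,3},\gamma]. \] Then there is a constant $C>0$, independent of $\gamma$ and $\phi$, such that \[ \|\partial_x\phi-\widetilde{\mathcal{P}}^L_k[\phi,\gamma]\|_{\infty}\le C\left(\frac1\gamma\right)^k\|\partial_x^{k+1}\phi\|_\infty,\qquad \|\partial_x\phi-\widetilde{\mathcal{P}}^R_k[\phi,\gamma]\|_{\infty}\le C\left(\frac1\gamma\right)^k\|\partial_x^{k+1}\phi\|_\infty, \] where $\|\cdot\|_\infty$ is the supremum norm on $[a,b]$.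
   Context: Fix $a<b$, $\gamma>0$, $\mu=e^{-\gamma(b-a)}$. For continuous $v$ on $[a,b]$ let $I^{L}[v,\gamma](x)=\gamma\int_a^x e^{-\gamma(x-y)}v(y)\,dy$, $I^{R}[v,\gamma](x)=\gamma\int_x^b e^{-\gamma(y-x)}v(y)\,dy$, $I^{0}[v,\gamma](x)=\frac{\gamma}{2}\int_a^b e^{-\gamma|x-y|}v(y)\,dy$. For a real number $c$: $\mathcal{D}_L^{\,c}[v,\gamma](x)=v(x)-I^L[v,\gamma](x)-(v(a)-c)e^{-\gamma(x-a)}$ (the unique operator of this form with value $c$ at $x=a$); $\mathcal{D}_R^{\,c}[v,\gamma](x)=v(x)-I^R[v,\gamma](x)-(v(b)-c)e^{-\gamma(b-x)}$ (value $c$ at $x=b$). For real numbers $c_a,c_b$: $\mathcal{D}_0^{\,c_a,c_b}[v,\gamma](x)=v(x)-I^0[v,\gamma](x)-A_0e^{-\gamma(x-a)}-B_0e^{-\gamma(b-x)}$ with $A_0=\frac{1}{1-\mu^2}\big(\mu(I^0[v,\gamma](b)-v(b)+c_b)-(I^0[v,\gamma](a)-v(a)+c_a)\big)$, $B_0=\frac{1}{1-\mu^2}\big(\mu(I^0[v,\gamma](a)-v(a)+c_a)-(I^0[v,\gamma](b)-v(b)+c_b)\big)$, so that its values at $a$ and $b$ are $c_a$ and $c_b$. Derivatives at endpoints are one-sided; $\phi'=\partial_x\phi$. *)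

theory Defs
  imports "HOL-Analysis.Analysis"
begin

definition IL :: "real \<Rightarrow> real \<Rightarrow> (real \<Rightarrow> real) \<Rightarrow> real \<Rightarrow> real" where
  "IL a \<gamma> v x = \<gamma> * integral {a..x} (\<lambda>y. exp (-\<gamma>*(x-y)) * v y)"

definition IR :: "real \<Rightarrow> real \<Rightarrow> (real \<Rightarrow> real) \<Rightarrow> real \<Rightarrow> real" where
  "IR b \<gamma> v x = \<gamma> * integral {x..b} (\<lambda>y. exp (-\<gamma>*(y-x)) * v y)"

definition I0 :: "real \<Rightarrow> real \<Rightarrow> real \<Rightarrow> (real \<Rightarrow> real) \<Rightarrow> real \<Rightarrow> real" where
  "I0 a b \<gamma> v x = \<gamma>/2 * integral {a..b} (\<lambda>y. exp (-\<gamma>*\<bar>x-y\<bar>) * v y)"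

definition DL :: "real \<Rightarrow> real \<Rightarrow> real \<Rightarrow> (real \<Rightarrow> real) \<Rightarrow> real \<Rightarrow> real" where
  "DL a \<gamma> c v x = v x - IL a \<gamma> v x - (v a - c) * exp (-\<gamma>*(x-a))"

definition DR :: "real \<Rightarrow> real \<Rightarrow> real \<Rightarrow> (real \<Rightarrow> real) \<Rightarrow> real \<Rightarrow> real" where
  "DR b \<gamma> c v x = v x - IR b \<gamma> v x - (v b - c) * exp (-\<gamma>*(b-x))"

definition D0 :: "real \<Rightarrow> real \<Rightarrow> real \<Rightarrow> real \<Rightarrow> real \<Rightarrow> (real \<Rightarrow> real) \<Rightarrow> real \<Rightarrow> real" where
  "D0 a b \<gamma> ca cb v x =
     (let \<mu> = exp (-\<gamma>*(b-a));
          A0 = (\<mu> * (I0 a b \<gamma> v b - v b + cb) - (I0 a b \<gamma> v a - v a + ca)) / (1 - \<mu>^2);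
          B0 = (\<mu> * (I0 a b \<gamma> v a - v a + ca) - (I0 a b \<gamma> v b - v b + cb)) / (1 - \<mu>^2)
      in v x - I0 a b \<gamma> v x - A0 * exp (-\<gamma>*(x-a)) - B0 * exp (-\<gamma>*(b-x)))"

(* d j = j-th derivative of phi = d 0 on [a,b] (one-sided at endpoints);
   phi in C^n[a,b] means derivatives up to order n exist and the n-th is continuous *)
definition Cn_family :: "real \<Rightarrow> real \<Rightarrow> nat \<Rightarrow> (nat \<Rightarrow> real \<Rightarrow> real) \<Rightarrow> bool" where
  "Cn_family a b n d \<longleftrightarrow>
     (\<forall>j<n. \<forall>x\<in>{a..b}. (d j has_real_derivative d (Suc j) x) (at x within {a..b})) \<and>
     continuous_on {a..b} (d n)"

definition phiL :: "real \<Rightarrow> real \<Rightarrow> nat \<Rightarrow> (nat \<Rightarrow> real \<Rightarrow> real) \<Rightarrow> nat \<Rightarrow> real \<Rightarrow> real" where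
  "phiL a \<gamma> k d p =
     (if p = 1 then d 0
      else if p = 2 then (\<lambda>x. DL a \<gamma> (d 1 a / \<gamma>) (d 0) x
              - (\<Sum>m=2..k. (-1/\<gamma>)^m * d m a * exp (-\<gamma>*(x-a))))
      else (\<lambda>x. DL a \<gamma> 0 (\<lambda>y. DL a \<gamma> (d 1 a / \<gamma>) (d 0) y
                  - (\<Sum>m=2..k. (-1/\<gamma>)^m * d m a * exp (-\<gamma>*(y-a)))) x
              + (\<Sum>m=2..k. (real m - 1) * (-1/\<gamma>)^m * d m a * exp (-\<gamma>*(x-a)))))"

definition phiR :: "real \<Rightarrow> real \<Rightarrow> nat \<Rightarrow> (nat \<Rightarrow> real \<Rightarrow> real) \<Rightarrow> nat \<Rightarrow> real \<Rightarrow> real" where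
  "phiR b \<gamma> k d p =
     (if p = 1 then d 0
      else if p = 2 then (\<lambda>x. DR b \<gamma> (- d 1 b / \<gamma>) (d 0) x
              - (\<Sum>m=2..k. (1/\<gamma>)^m * d m b * exp (-\<gamma>*(b-x))))
      else (\<lambda>x. DR b \<gamma> 0 (\<lambda>y. DR b \<gamma> (- d 1 b / \<gamma>) (d 0) y
                  - (\<Sum>m=2..k. (1/\<gamma>)^m * d m b * exp (-\<gamma>*(b-y)))) x
              + (\<Sum>m=2..k. (real m - 1) * (1/\<gamma>)^m * d m b * exp (-\<gamma>*(b-x)))))"

definition PL :: "real \<Rightarrow> real \<Rightarrow> real \<Rightarrow> nat \<Rightarrow> (nat \<Rightarrow> real \<Rightarrow> real) \<Rightarrow> real \<Rightarrow> real" where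
  "PL a b \<gamma> k d x =
     \<gamma> * DL a \<gamma> (d 1 a / \<gamma>) (phiL a \<gamma> k d 1) x
     + \<gamma> * (\<Sum>p=2..k. DL a \<gamma> 0 (phiL a \<gamma> k d p) x)
     - (if k = 3 then \<gamma> * D0 a b \<gamma> 0 0 (phiL a \<gamma> k d 3) x else 0)"

definition PR :: "real \<Rightarrow> real \<Rightarrow> real \<Rightarrow> nat \<Rightarrow> (nat \<Rightarrow> real \<Rightarrow> real) \<Rightarrow> real \<Rightarrow> real" where
  "PR a b \<gamma> k d x =
     - \<gamma> * DR b \<gamma> (- d 1 b / \<gamma>) (phiR b \<gamma> k d 1) x
     - \<gamma> * (\<Sum>p=2..k. DR b \<gamma> 0 (phiR b \<gamma> k d p) x)
     + (if k = 3 then \<gamma> * D0 a b \<gamma> 0 0 (phiR b \<gamma> k d 3) x else 0)"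

end

theory Submission
  imports Defs
begin


lemma IL_cong:
  assumes "\<And>y. y \<in> {a..x} \<Longrightarrow> u y = v y"
  shows "IL a g u x = IL a g v x"
  unfolding IL_def using assms by (metis (no_types, lifting) integral_cong)

lemma IR_cong:
  assumes "\<And>y. y \<in> {x..b} \<Longrightarrow> u y = v y"
  shows "IR b g u x = IR b g v x"
  unfolding IR_def using assms by (metis (no_types, lifting) integral_cong)

lemma int_L:
  fixes u :: "real \<Rightarrow> real"
  assumes "continuous_on {a..b} u" "x \<in> {a..b}"
  shows "(\<lambda>y. exp (-g*(x-y)) * u y) integrable_on {a..x}"
proof -
  have "continuous_on {a..x} u" using assms by (elim continuous_on_subset) (auto simp: subset_iff)
  then have "continuous_on {a..x} (\<lambda>y. exp (-g*(x-y)) * u y)"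
    by (intro continuous_intros)
  then show ?thesis by (rule integrable_continuous_interval)
qed

lemma int_R:
  fixes u :: "real \<Rightarrow> real"
  assumes "continuous_on {a..b} u" "x \<in> {a..b}"
  shows "(\<lambda>y. exp (-g*(y-x)) * u y) integrable_on {x..b}"
proof -
  have "continuous_on {x..b} u" using assms by (elim continuous_on_subset) (auto simp: subset_iff)
  then have "continuous_on {x..b} (\<lambda>y. exp (-g*(y-x)) * u y)"
    by (intro continuous_intros)
  then show ?thesis by (rule integrable_continuous_interval)
qed

lemma IL_add:
  assumes "continuous_on {a..b} u" "continuous_on {a..b} v" "x \<in> {a..b}"
  shows "IL a g (\<lambda>y. u y + v y) x = IL a g u x + IL a g v x"
  unfolding IL_def using int_L[OF assms(1,3)] int_L[OF assms(2,3)]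
  by (simp add: distrib_left integral_add)

lemma IL_diff:
  assumes "continuous_on {a..b} u" "continuous_on {a..b} v" "x \<in> {a..b}"
  shows "IL a g (\<lambda>y. u y - v y) x = IL a g u x - IL a g v x"
  unfolding IL_def using int_L[OF assms(1,3)] int_L[OF assms(2,3)]
  by (simp add: right_diff_distrib integral_diff)

lemma IL_cmul: "IL a g (\<lambda>y. c * u y) x = c * IL a g u x"
  unfolding IL_def by (simp add: mult.left_commute)

lemma IL_div: "IL a g (\<lambda>y. u y / c) x = IL a g u x / c"
  unfolding IL_def by (simp add: times_divide_eq_right)

lemma IR_add:
  assumes "continuous_on {a..b} u" "continuous_on {a..b} v" "x \<in> {a..b}"
  shows "IR b g (\<lambda>y. u y + v y) x = IR b g u x + IR b g v x"
  unfolding IR_def using int_R[OF assms(1,3)] int_R[OF assms(2,3)]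
  by (simp add: distrib_left integral_add)

lemma IR_diff:
  assumes "continuous_on {a..b} u" "continuous_on {a..b} v" "x \<in> {a..b}"
  shows "IR b g (\<lambda>y. u y - v y) x = IR b g u x - IR b g v x"
  unfolding IR_def using int_R[OF assms(1,3)] int_R[OF assms(2,3)]
  by (simp add: right_diff_distrib integral_diff)

lemma IR_cmul: "IR b g (\<lambda>y. c * u y) x = c * IR b g u x"
  unfolding IR_def by (simp add: mult.left_commute)

lemma IR_div: "IR b g (\<lambda>y. u y / c) x = IR b g u x / c"
  unfolding IR_def by (simp add: times_divide_eq_right)

lemma IL_at_a: "IL a g u a = 0"
  unfolding IL_def by simp

lemma IR_at_b: "IR b g u b = 0"
  unfolding IR_def by simp


lemma IL_ibp:
  fixes w w1 :: "real \<Rightarrow> real"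
  assumes g: "g > 0"
    and der: "\<And>y. y \<in> {a..b} \<Longrightarrow> (w has_real_derivative w1 y) (at y within {a..b})"
    and c1: "continuous_on {a..b} w1" and x: "x \<in> {a..b}"
  shows "IL a g w x = w x - w a * exp (-g*(x-a)) - IL a g w1 x / g"
proof -
  have c0: "continuous_on {a..b} w" using der by (rule DERIV_continuous_on)
  define F where "F = (\<lambda>y. exp (-g*(x-y)) * w y)"
  have "\<And>y. y \<in> {a..x} \<Longrightarrow> (F has_vector_derivative
      (g * (exp (-g*(x-y)) * w y) + exp (-g*(x-y)) * w1 y)) (at y within {a..x})"
  proof -
    fix y assume y: "y \<in> {a..x}"
    then have yy: "y \<in> {a..b}" using x by auto
    have d: "(w has_real_derivative w1 y) (at y within {a..x})"
      using DERIV_subset[OF der[OF yy]] x by auto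
    have "(F has_real_derivative (exp (-g*(x-y)) * g * w y + exp (-g*(x-y)) * w1 y)) (at y within {a..x})"
      unfolding F_def by (auto intro!: derivative_eq_intros d)
    then show "(F has_vector_derivative
      (g * (exp (-g*(x-y)) * w y) + exp (-g*(x-y)) * w1 y)) (at y within {a..x})"
      by (simp add: has_real_derivative_iff_has_vector_derivative algebra_simps)
  qed
  from fundamental_theorem_of_calculus[OF _ this] x
  have "((\<lambda>y. g * (exp (-g*(x-y)) * w y) + exp (-g*(x-y)) * w1 y) has_integral (F x - F a)) {a..x}"
    by auto
  then have "integral {a..x} (\<lambda>y. g * (exp (-g*(x-y)) * w y) + exp (-g*(x-y)) * w1 y) = F x - F a"
    by (rule integral_unique)
  moreover have "integral {a..x} (\<lambda>y. g * (exp (-g*(x-y)) * w y) + exp (-g*(x-y)) * w1 y)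
     = g * integral {a..x} (\<lambda>y. exp (-g*(x-y)) * w y) + integral {a..x} (\<lambda>y. exp (-g*(x-y)) * w1 y)"
    using integral_add[OF integrable_on_mult_right[OF int_L[OF c0 x, of g], of g] int_L[OF c1 x, of g]] by simp
  ultimately have "IL a g w x + IL a g w1 x / g = F x - F a"
    unfolding IL_def using g by simp
  then show ?thesis unfolding F_def by (simp add: algebra_simps)
qed

lemma IR_ibp:
  fixes w w1 :: "real \<Rightarrow> real"
  assumes g: "g > 0"
    and der: "\<And>y. y \<in> {a..b} \<Longrightarrow> (w has_real_derivative w1 y) (at y within {a..b})"
    and c1: "continuous_on {a..b} w1" and x: "x \<in> {a..b}"
  shows "IR b g w x = w x - w b * exp (-g*(b-x)) + IR b g w1 x / g"
proof -
  have c0: "continuous_on {a..b} w" using der by (rule DERIV_continuous_on)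
  define F where "F = (\<lambda>y. exp (-g*(y-x)) * w y)"
  have "\<And>y. y \<in> {x..b} \<Longrightarrow> (F has_vector_derivative
      (- g * (exp (-g*(y-x)) * w y) + exp (-g*(y-x)) * w1 y)) (at y within {x..b})"
  proof -
    fix y assume y: "y \<in> {x..b}"
    then have yy: "y \<in> {a..b}" using x by auto
    have d: "(w has_real_derivative w1 y) (at y within {x..b})"
      using DERIV_subset[OF der[OF yy]] x by auto
    have "(F has_real_derivative (exp (-g*(y-x)) * (-g) * w y + exp (-g*(y-x)) * w1 y)) (at y within {x..b})"
      unfolding F_def by (auto intro!: derivative_eq_intros d)
    then show "(F has_vector_derivative
      (- g * (exp (-g*(y-x)) * w y) + exp (-g*(y-x)) * w1 y)) (at y within {x..b})"
      by (simp add: has_real_derivative_iff_has_vector_derivative algebra_simps)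
  qed
  from fundamental_theorem_of_calculus[OF _ this] x
  have "((\<lambda>y. - g * (exp (-g*(y-x)) * w y) + exp (-g*(y-x)) * w1 y) has_integral (F b - F x)) {x..b}"
    by auto
  then have "integral {x..b} (\<lambda>y. - g * (exp (-g*(y-x)) * w y) + exp (-g*(y-x)) * w1 y) = F b - F x"
    by (rule integral_unique)
  moreover have "integral {x..b} (\<lambda>y. - g * (exp (-g*(y-x)) * w y) + exp (-g*(y-x)) * w1 y)
     = - g * integral {x..b} (\<lambda>y. exp (-g*(y-x)) * w y) + integral {x..b} (\<lambda>y. exp (-g*(y-x)) * w1 y)"
    using integral_add[OF integrable_on_mult_right[OF int_R[OF c0 x, of g], of "-g"] int_R[OF c1 x, of g]] by simp
  ultimately have "- IR b g w x + IR b g w1 x / g = F b - F x"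
    unfolding IR_def using g by simp
  then show ?thesis unfolding F_def by (simp add: algebra_simps)
qed


lemma IL_const:
  assumes g: "g > 0" and x: "x \<in> {a..b}"
  shows "IL a g (\<lambda>_. M) x = M * (1 - exp (-g*(x-a)))"
proof -
  have "IL a g (\<lambda>_. M) x = M - M * exp (-g*(x-a)) - IL a g (\<lambda>_. 0) x / g"
    by (rule IL_ibp[OF g _ _ x]) (auto intro!: derivative_eq_intros)
  moreover have "IL a g (\<lambda>_. 0) x = 0" unfolding IL_def by simp
  ultimately show ?thesis by (simp add: algebra_simps)
qed

lemma IR_const:
  assumes g: "g > 0" and x: "x \<in> {a..b}"
  shows "IR b g (\<lambda>_. M) x = M * (1 - exp (-g*(b-x)))"
proof -
  have "IR b g (\<lambda>_. M) x = M - M * exp (-g*(b-x)) + IR b g (\<lambda>_. 0) x / g"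
    by (rule IR_ibp[OF g _ _ x]) (auto intro!: derivative_eq_intros)
  moreover have "IR b g (\<lambda>_. 0) x = 0" unfolding IR_def by simp
  ultimately show ?thesis by (simp add: algebra_simps)
qed

lemma IL_bound:
  fixes u :: "real \<Rightarrow> real"
  assumes g: "g > 0" and c: "continuous_on {a..b} u" and M: "\<And>y. y \<in> {a..b} \<Longrightarrow> \<bar>u y\<bar> \<le> M"
    and x: "x \<in> {a..b}"
  shows "\<bar>IL a g u x\<bar> \<le> M * (1 - exp (-g*(x-a)))"
proof -
  have cM: "continuous_on {a..b} (\<lambda>_::real. M)" by simp
  have "norm (integral {a..x} (\<lambda>y. exp (-g*(x-y)) * u y)) \<le> integral {a..x} (\<lambda>y. exp (-g*(x-y)) * M)"
    by (rule integral_norm_bound_integral[OF int_L[OF c x] int_L[OF cM x]])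
       (use M x in \<open>auto simp: abs_mult intro!: mult_left_mono\<close>)
  then have "\<bar>IL a g u x\<bar> \<le> IL a g (\<lambda>_. M) x"
    unfolding IL_def using g by (simp add: abs_mult)
  then show ?thesis using IL_const[OF g x] by simp
qed

lemma IR_bound:
  fixes u :: "real \<Rightarrow> real"
  assumes g: "g > 0" and c: "continuous_on {a..b} u" and M: "\<And>y. y \<in> {a..b} \<Longrightarrow> \<bar>u y\<bar> \<le> M"
    and x: "x \<in> {a..b}"
  shows "\<bar>IR b g u x\<bar> \<le> M * (1 - exp (-g*(b-x)))"
proof -
  have cM: "continuous_on {a..b} (\<lambda>_::real. M)" by simp
  have "norm (integral {x..b} (\<lambda>y. exp (-g*(y-x)) * u y)) \<le> integral {x..b} (\<lambda>y. exp (-g*(y-x)) * M)"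
    by (rule integral_norm_bound_integral[OF int_R[OF c x] int_R[OF cM x]])
       (use M x in \<open>auto simp: abs_mult intro!: mult_left_mono\<close>)
  then have "\<bar>IR b g u x\<bar> \<le> IR b g (\<lambda>_. M) x"
    unfolding IR_def using g by (simp add: abs_mult)
  then show ?thesis using IR_const[OF g x] by simp
qed

lemma IL_bound1:
  fixes u :: "real \<Rightarrow> real"
  assumes g: "g > 0" and c: "continuous_on {a..b} u" and M: "\<And>y. y \<in> {a..b} \<Longrightarrow> \<bar>u y\<bar> \<le> M"
    and x: "x \<in> {a..b}"
  shows "\<bar>IL a g u x\<bar> \<le> M"
proof -
  have "0 \<le> M" using M[of a] x by auto
  moreover have "exp (-g*(x-a)) > 0" by simp
  ultimately have "M * (1 - exp (-g*(x-a))) \<le> M" by (simp add: algebra_simps)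
  then show ?thesis using IL_bound[OF assms] by linarith
qed

lemma IR_bound1:
  fixes u :: "real \<Rightarrow> real"
  assumes g: "g > 0" and c: "continuous_on {a..b} u" and M: "\<And>y. y \<in> {a..b} \<Longrightarrow> \<bar>u y\<bar> \<le> M"
    and x: "x \<in> {a..b}"
  shows "\<bar>IR b g u x\<bar> \<le> M"
proof -
  have "0 \<le> M" using M[of b] x by auto
  moreover have "exp (-g*(b-x)) > 0" by simp
  ultimately have "M * (1 - exp (-g*(b-x))) \<le> M" by (simp add: algebra_simps)
  then show ?thesis using IR_bound[OF assms] by linarith
qed

lemma IL_deriv:
  fixes u :: "real \<Rightarrow> real"
  assumes c: "continuous_on {a..b} u" and x: "x \<in> {a..b}"
  shows "(IL a g u has_real_derivative g * (u x - IL a g u x)) (at x within {a..b})"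
proof -
  have eq: "IL a g u = (\<lambda>x. g * exp (-g*x) * integral {a..x} (\<lambda>y. exp (g*y) * u y))"
  proof
    fix x
    have "integral {a..x} (\<lambda>y. exp (-g*(x-y)) * u y) = integral {a..x} (\<lambda>y. exp (-g*x) * (exp (g*y) * u y))"
      by (simp add: algebra_simps flip: exp_add)
    then show "IL a g u x = g * exp (-g*x) * integral {a..x} (\<lambda>y. exp (g*y) * u y)"
      unfolding IL_def by simp
  qed
  have ce: "continuous_on {a..b} (\<lambda>y. exp (g*y) * u y)" by (intro continuous_intros c)
  have "((\<lambda>x. g * exp (-g*x) * integral {a..x} (\<lambda>y. exp (g*y) * u y)) has_real_derivative
     g * (exp (-g*x) * (-g)) * integral {a..x} (\<lambda>y. exp (g*y) * u y) + g * exp (-g*x) * (exp (g*x) * u x))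
     (at x within {a..b})"
    by (auto intro!: derivative_eq_intros integral_has_real_derivative[OF ce x])
  moreover have "g * (exp (-g*x) * (-g)) * integral {a..x} (\<lambda>y. exp (g*y) * u y) + g * exp (-g*x) * (exp (g*x) * u x)
     = g * (u x - IL a g u x)"
    unfolding eq by (simp add: algebra_simps flip: exp_add)
  ultimately show ?thesis unfolding eq by simp
qed

lemma IR_deriv:
  fixes u :: "real \<Rightarrow> real"
  assumes c: "continuous_on {a..b} u" and x: "x \<in> {a..b}"
  shows "(IR b g u has_real_derivative g * (IR b g u x - u x)) (at x within {a..b})"
proof -
  define G where "G = (\<lambda>x. g * exp (g*x) * (integral {a..b} (\<lambda>y. exp (-(g*y)) * u y) - integral {a..x} (\<lambda>y. exp (-(g*y)) * u y)))"
  have ce: "continuous_on {a..b} (\<lambda>y. exp (-(g*y)) * u y)" by (intro continuous_intros c)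
  have eq: "IR b g u z = G z" if z: "z \<in> {a..b}" for z
  proof -
    have "integral {z..b} (\<lambda>y. exp (-g*(y-z)) * u y) = integral {z..b} (\<lambda>y. exp (g*z) * (exp (-(g*y)) * u y))"
      by (simp add: algebra_simps flip: exp_add)
    also have "\<dots> = exp (g*z) * (integral {a..b} (\<lambda>y. exp (-(g*y)) * u y) - integral {a..z} (\<lambda>y. exp (-(g*y)) * u y))"
      using Henstock_Kurzweil_Integration.integral_combine[where a=a and c=z and b=b and f="\<lambda>y. exp (-(g*y)) * u y"] z integrable_continuous_interval[OF ce] by auto
    finally show ?thesis unfolding IR_def G_def by simp
  qed
  have "(G has_real_derivative
     g * (exp (g*x) * g) * (integral {a..b} (\<lambda>y. exp (-(g*y)) * u y) - integral {a..x} (\<lambda>y. exp (-(g*y)) * u y)) - g * exp (g*x) * (exp (-(g*x)) * u x))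
     (at x within {a..b})"
    unfolding G_def by (auto intro!: derivative_eq_intros integral_has_real_derivative[OF ce x])
  moreover have "g * (exp (g*x) * g) * (integral {a..b} (\<lambda>y. exp (-(g*y)) * u y) - integral {a..x} (\<lambda>y. exp (-(g*y)) * u y)) - g * exp (g*x) * (exp (-(g*x)) * u x)
     = g * (IR b g u x - u x)"
    by (simp add: eq[OF x] G_def exp_minus field_simps)
  ultimately have "(G has_real_derivative g * (IR b g u x - u x)) (at x within {a..b})" by simp
  then show ?thesis
    by (rule has_field_derivative_transform_within[where d=1]) (use x eq in auto)
qed



lemma I0_split:
  fixes v :: "real \<Rightarrow> real"
  assumes c: "continuous_on {a..b} v" and x: "x \<in> {a..b}"
  shows "I0 a b g v x = (IL a g v x + IR b g v x) / 2"
proof -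
  have ce: "continuous_on {a..b} (\<lambda>y. exp (-g*\<bar>x-y\<bar>) * v y)" by (intro continuous_intros c)
  have "integral {a..b} (\<lambda>y. exp (-g*\<bar>x-y\<bar>) * v y)
     = integral {a..x} (\<lambda>y. exp (-g*\<bar>x-y\<bar>) * v y) + integral {x..b} (\<lambda>y. exp (-g*\<bar>x-y\<bar>) * v y)"
    using Henstock_Kurzweil_Integration.integral_combine[where a=a and c=x and b=b and f="\<lambda>y. exp (-g*\<bar>x-y\<bar>) * v y"]
      x integrable_continuous_interval[OF ce] by auto
  also have "integral {a..x} (\<lambda>y. exp (-g*\<bar>x-y\<bar>) * v y) = integral {a..x} (\<lambda>y. exp (-g*(x-y)) * v y)"
    by (rule integral_cong) auto
  also have "integral {x..b} (\<lambda>y. exp (-g*\<bar>x-y\<bar>) * v y) = integral {x..b} (\<lambda>y. exp (-g*(y-x)) * v y)"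
    by (rule integral_cong) auto
  finally show ?thesis unfolding I0_def IL_def IR_def by (simp add: algebra_simps)
qed

lemma D0_alg:
  fixes mu :: real
  assumes "1 - mu^2 \<noteq> 0"
    and "Vx - Ix = c1 * ex + c2 * fx + hx"
    and "Va - Ia = c1 + c2 * mu + ha"
    and "Vb - Ib = c1 * mu + c2 + hb"
  shows "Vx - Ix - ((mu * (Ib - Vb + 0) - (Ia - Va + 0)) / (1 - mu^2)) * ex
           - ((mu * (Ia - Va + 0) - (Ib - Vb + 0)) / (1 - mu^2)) * fx
         = hx - (ha - mu * hb) / (1 - mu^2) * ex - (hb - mu * ha) / (1 - mu^2) * fx"
proof -
  have i1: "Ia = Va - (c1 + c2 * mu + ha)" and i2: "Ib = Vb - (c1 * mu + c2 + hb)" using assms by auto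
  show ?thesis unfolding i1 i2 using assms(1,2)
    by (simp add: field_simps power2_eq_square)
qed


lemma key_alg:
  fixes g :: real
  assumes g: "g > 0"
   and e1: "L0 = vz - va * ea - L1 / g"
   and e2: "L1 = v1z - v1a * ea - L2 / g"
   and e3: "R0 = vz - vb * eb + R1 / g"
   and e4: "R1 = v1z - v1b * eb + R2 / g"
  shows "vz - (L0 + R0) / 2 = ((va - v1a / g) / 2) * ea + ((vb + v1b / g) / 2) * eb + (- (L2 + R2) / (2*g^2))"
  unfolding e1 e3 e2 e4 using g by (simp add: field_simps power2_eq_square)

lemma D0_bound:
  fixes v v1 v2 :: "real \<Rightarrow> real"
  assumes g: "g > 0" and ab: "a < b"
    and d0: "\<And>y. y \<in> {a..b} \<Longrightarrow> (v has_real_derivative v1 y) (at y within {a..b})"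
    and d1: "\<And>y. y \<in> {a..b} \<Longrightarrow> (v1 has_real_derivative v2 y) (at y within {a..b})"
    and c2: "continuous_on {a..b} v2"
    and M: "\<And>y. y \<in> {a..b} \<Longrightarrow> \<bar>v2 y\<bar> \<le> M"
    and x: "x \<in> {a..b}"
  shows "\<bar>D0 a b g 0 0 v x\<bar> \<le> 2 * M / g^2"
proof -
  have c0: "continuous_on {a..b} v" using d0 by (rule DERIV_continuous_on)
  have c1: "continuous_on {a..b} v1" using d1 by (rule DERIV_continuous_on)
  define mu where "mu = exp (-g*(b-a))"
  have mu0: "0 < mu" and mu1: "mu < 1" unfolding mu_def using g ab by auto
  define h where "h z = - (IL a g v2 z + IR b g v2 z) / (2*g^2)" for z
  define cc1 where "cc1 = (v a - v1 a / g) / 2"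
  define cc2 where "cc2 = (v b + v1 b / g) / 2"
  have key: "v z - I0 a b g v z = cc1 * exp (-g*(z-a)) + cc2 * exp (-g*(b-z)) + h z"
    if z: "z \<in> {a..b}" for z
  proof -
    have e1: "IL a g v z = v z - v a * exp (-g*(z-a)) - IL a g v1 z / g" by (rule IL_ibp[OF g d0 c1 z])
    have e2: "IL a g v1 z = v1 z - v1 a * exp (-g*(z-a)) - IL a g v2 z / g" by (rule IL_ibp[OF g d1 c2 z])
    have e3: "IR b g v z = v z - v b * exp (-g*(b-z)) + IR b g v1 z / g" by (rule IR_ibp[OF g d0 c1 z])
    have e4: "IR b g v1 z = v1 z - v1 b * exp (-g*(b-z)) + IR b g v2 z / g" by (rule IR_ibp[OF g d1 c2 z])
    show ?thesis unfolding I0_split[OF c0 z] h_def cc1_def cc2_def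
      by (rule key_alg[OF g e1 e2 e3 e4])
  qed
  have ka: "v a - I0 a b g v a = cc1 + cc2 * mu + h a" using key[of a] ab unfolding mu_def by simp
  have kb: "v b - I0 a b g v b = cc1 * mu + cc2 + h b" using key[of b] ab unfolding mu_def by simp
  have "mu * mu < mu" using mu0 mu1 by simp
  then have mu3: "1 - mu^2 > 0" using mu1 by (simp add: power2_eq_square)
  then have mu2: "1 - mu^2 \<noteq> 0" by simp
  have D: "D0 a b g 0 0 v x = h x - (h a - mu * h b) / (1 - mu^2) * exp (-g*(x-a))
             - (h b - mu * h a) / (1 - mu^2) * exp (-g*(b-x))"
    unfolding D0_def Let_def mu_def[symmetric]
    by (rule D0_alg[OF mu2 key[OF x] ka kb])
  define P where "P = M / (2*g^2)"
  have M0: "0 \<le> M" using M[of a] ab by auto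
  have P0: "0 \<le> P" unfolding P_def using M0 g by simp
  have hx: "\<bar>h x\<bar> \<le> 2 * P"
  proof -
    have "\<bar>IL a g v2 x\<bar> \<le> M" by (rule IL_bound1[OF g c2 M x])
    moreover have "\<bar>IR b g v2 x\<bar> \<le> M" by (rule IR_bound1[OF g c2 M x])
    ultimately have "\<bar>IL a g v2 x + IR b g v2 x\<bar> \<le> 2 * M" by linarith
    then show ?thesis unfolding h_def P_def using g by (simp add: abs_div field_simps)
  qed
  have ha: "\<bar>h a\<bar> \<le> P * (1 - mu)"
  proof -
    have "\<bar>IR b g v2 a\<bar> \<le> M * (1 - mu)" using IR_bound[OF g c2 M, of a] ab unfolding mu_def by simp
    then show ?thesis unfolding h_def P_def using g by (simp add: IL_at_a abs_div field_simps)
  qed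
  have hb: "\<bar>h b\<bar> \<le> P * (1 - mu)"
  proof -
    have "\<bar>IL a g v2 b\<bar> \<le> M * (1 - mu)" using IL_bound[OF g c2 M, of b] ab unfolding mu_def by simp
    then show ?thesis unfolding h_def P_def using g by (simp add: IR_at_b abs_div field_simps)
  qed
  have q: "\<bar>(p - mu * q) / (1 - mu^2)\<bar> \<le> P" if p: "\<bar>p\<bar> \<le> P * (1 - mu)" and qq: "\<bar>q\<bar> \<le> P * (1 - mu)" for p q
  proof -
    have "\<bar>p - mu * q\<bar> \<le> \<bar>p\<bar> + mu * \<bar>q\<bar>" using abs_triangle_ineq4[of p "mu*q"] mu0 by (simp add: abs_mult)
    also have "\<dots> \<le> P * (1 - mu) + mu * (P * (1 - mu))" using p qq mu0 by (intro add_mono mult_left_mono) auto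
    also have "\<dots> = P * (1 - mu^2)" by (simp add: algebra_simps power2_eq_square)
    finally have "\<bar>p - mu * q\<bar> \<le> P * (1 - mu^2)" .
    then show ?thesis using mu3 by (simp add: abs_div pos_divide_le_eq)
  qed
  have ea: "0 < exp (-g*(x-a))" "exp (-g*(x-a)) \<le> 1" using x g by auto
  have eb: "0 < exp (-g*(b-x))" "exp (-g*(b-x)) \<le> 1" using x g by auto
  have t1: "\<bar>(h a - mu * h b) / (1 - mu^2) * exp (-g*(x-a))\<bar> \<le> P"
    using mult_mono[OF q[OF ha hb] ea(2)] ea(1) P0 by (simp add: abs_mult)
  have t2: "\<bar>(h b - mu * h a) / (1 - mu^2) * exp (-g*(b-x))\<bar> \<le> P"
    using mult_mono[OF q[OF hb ha] eb(2)] eb(1) P0 by (simp add: abs_mult)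
  have "\<bar>D0 a b g 0 0 v x\<bar> \<le> 4 * P" using hx t1 t2 unfolding D abs_le_iff by linarith
  then show ?thesis unfolding P_def using g by (simp add: field_simps)
qed



lemma IL_lin3:
  assumes "continuous_on {a..b} u1" "continuous_on {a..b} u2" "continuous_on {a..b} u3" "x \<in> {a..b}"
  shows "IL a g (\<lambda>y. c1 * u1 y + c2 * u2 y + c3 * u3 y) x = c1 * IL a g u1 x + c2 * IL a g u2 x + c3 * IL a g u3 x"
proof -
  have "IL a g (\<lambda>y. c1 * u1 y + c2 * u2 y + c3 * u3 y) x = IL a g (\<lambda>y. c1 * u1 y + c2 * u2 y) x + IL a g (\<lambda>y. c3 * u3 y) x"
    by (rule IL_add) (use assms in \<open>auto intro!: continuous_intros\<close>)
  also have "IL a g (\<lambda>y. c1 * u1 y + c2 * u2 y) x = IL a g (\<lambda>y. c1 * u1 y) x + IL a g (\<lambda>y. c2 * u2 y) x"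
    by (rule IL_add) (use assms in \<open>auto intro!: continuous_intros\<close>)
  finally show ?thesis by (simp add: IL_cmul)
qed

lemma IL_lin4:
  assumes "continuous_on {a..b} u1" "continuous_on {a..b} u2" "continuous_on {a..b} u3" "continuous_on {a..b} u4" "x \<in> {a..b}"
  shows "IL a g (\<lambda>y. c1 * u1 y + c2 * u2 y + c3 * u3 y + c4 * u4 y) x = c1 * IL a g u1 x + c2 * IL a g u2 x + c3 * IL a g u3 x + c4 * IL a g u4 x"
proof -
  have "IL a g (\<lambda>y. c1 * u1 y + c2 * u2 y + c3 * u3 y + c4 * u4 y) x = IL a g (\<lambda>y. c1 * u1 y + c2 * u2 y + c3 * u3 y) x + IL a g (\<lambda>y. c4 * u4 y) x"
    by (rule IL_add) (use assms in \<open>auto intro!: continuous_intros\<close>)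
  then show ?thesis using IL_lin3[OF assms(1-3,5)] by (simp add: IL_cmul)
qed

lemma IR_lin3:
  assumes "continuous_on {a..b} u1" "continuous_on {a..b} u2" "continuous_on {a..b} u3" "x \<in> {a..b}"
  shows "IR b g (\<lambda>y. c1 * u1 y + c2 * u2 y + c3 * u3 y) x = c1 * IR b g u1 x + c2 * IR b g u2 x + c3 * IR b g u3 x"
proof -
  have "IR b g (\<lambda>y. c1 * u1 y + c2 * u2 y + c3 * u3 y) x = IR b g (\<lambda>y. c1 * u1 y + c2 * u2 y) x + IR b g (\<lambda>y. c3 * u3 y) x"
    by (rule IR_add) (use assms in \<open>auto intro!: continuous_intros\<close>)
  also have "IR b g (\<lambda>y. c1 * u1 y + c2 * u2 y) x = IR b g (\<lambda>y. c1 * u1 y) x + IR b g (\<lambda>y. c2 * u2 y) x"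
    by (rule IR_add) (use assms in \<open>auto intro!: continuous_intros\<close>)
  finally show ?thesis by (simp add: IR_cmul)
qed

lemma IR_lin4:
  assumes "continuous_on {a..b} u1" "continuous_on {a..b} u2" "continuous_on {a..b} u3" "continuous_on {a..b} u4" "x \<in> {a..b}"
  shows "IR b g (\<lambda>y. c1 * u1 y + c2 * u2 y + c3 * u3 y + c4 * u4 y) x = c1 * IR b g u1 x + c2 * IR b g u2 x + c3 * IR b g u3 x + c4 * IR b g u4 x"
proof -
  have "IR b g (\<lambda>y. c1 * u1 y + c2 * u2 y + c3 * u3 y + c4 * u4 y) x = IR b g (\<lambda>y. c1 * u1 y + c2 * u2 y + c3 * u3 y) x + IR b g (\<lambda>y. c4 * u4 y) x"
    by (rule IR_add) (use assms in \<open>auto intro!: continuous_intros\<close>)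
  then show ?thesis using IR_lin3[OF assms(1-3,5)] by (simp add: IR_cmul)
qed

lemma IL_cont:
  assumes "continuous_on {a..b} u" shows "continuous_on {a..b} (IL a g u)"
  using IL_deriv[OF assms] by (rule DERIV_continuous_on)

lemma IR_cont:
  assumes "continuous_on {a..b} u" shows "continuous_on {a..b} (IR b g u)"
  using IR_deriv[OF assms] by (rule DERIV_continuous_on)

lemma L1:
  fixes d :: "nat \<Rightarrow> real \<Rightarrow> real"
  assumes g: "g > 0" and ab: "a < b" and x: "x \<in> {a..b}"
    and D: "\<And>j y. j < 2 \<Longrightarrow> y \<in> {a..b} \<Longrightarrow> (d j has_real_derivative d (Suc j) y) (at y within {a..b})"
    and C: "continuous_on {a..b} (d 2)"
    and M: "\<And>y. y \<in> {a..b} \<Longrightarrow> \<bar>d 2 y\<bar> \<le> M"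
  shows "\<bar>d 1 x - PL a b g 1 d x\<bar> \<le> 3 * (1/g)^1 * M"
proof -
  have D0: "\<And>y. y \<in> {a..b} \<Longrightarrow> (d 0 has_real_derivative d 1 y) (at y within {a..b})" using D[of 0] by simp
  have D1: "\<And>y. y \<in> {a..b} \<Longrightarrow> (d 1 has_real_derivative d 2 y) (at y within {a..b})" using D[of 1] by (simp add: numeral_2_eq_2)
  have C1: "continuous_on {a..b} (d 1)" using D1 by (rule DERIV_continuous_on)
  have e0: "IL a g (d 0) x = d 0 x - d 0 a * exp (-g*(x-a)) - IL a g (d 1) x / g" by (rule IL_ibp[OF g D0 C1 x])
  have e1: "IL a g (d 1) x = d 1 x - d 1 a * exp (-g*(x-a)) - IL a g (d 2) x / g" by (rule IL_ibp[OF g D1 C x])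
  have "PL a b g 1 d x = g * DL a g (d 1 a / g) (d 0) x"
    by (simp add: PL_def phiL_def)
  also have "\<dots> = d 1 x - IL a g (d 2) x / g"
    unfolding DL_def e0 e1 using g by (simp add: field_simps)
  finally have "d 1 x - PL a b g 1 d x = IL a g (d 2) x / g" by simp
  moreover have "\<bar>IL a g (d 2) x\<bar> \<le> M" by (rule IL_bound1[OF g C M x])
  moreover have "0 \<le> M" using M[of a] ab by auto
  ultimately show ?thesis using g by (simp add: abs_div divide_right_mono)
qed


lemma phiL_1: "phiL a g k d (Suc 0) = d 0" "phiL a g k d 1 = d 0" by (simp_all add: phiL_def)
lemma phiR_1: "phiR b g k d (Suc 0) = d 0" "phiR b g k d 1 = d 0" by (simp_all add: phiR_def)

lemma set23: "{2..3::nat} = {2,3}" by auto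
lemma set22: "{2..2::nat} = {2}" by auto

lemma L2:
  fixes d :: "nat \<Rightarrow> real \<Rightarrow> real"
  assumes g: "g > 0" and ab: "a < b" and x: "x \<in> {a..b}"
    and D: "\<And>j y. j < 3 \<Longrightarrow> y \<in> {a..b} \<Longrightarrow> (d j has_real_derivative d (Suc j) y) (at y within {a..b})"
    and C: "continuous_on {a..b} (d 3)"
    and M: "\<And>y. y \<in> {a..b} \<Longrightarrow> \<bar>d 3 y\<bar> \<le> M"
  shows "\<bar>d 1 x - PL a b g 2 d x\<bar> \<le> 3 * (1/g)^2 * M"
proof -
  have D0: "\<And>y. y \<in> {a..b} \<Longrightarrow> (d 0 has_real_derivative d 1 y) (at y within {a..b})" using D[of 0] by simp
  have D1: "\<And>y. y \<in> {a..b} \<Longrightarrow> (d 1 has_real_derivative d 2 y) (at y within {a..b})" using D[of 1] by (simp add: numeral_2_eq_2)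
  have D2: "\<And>y. y \<in> {a..b} \<Longrightarrow> (d 2 has_real_derivative d 3 y) (at y within {a..b})" using D[of 2] by (simp add: numeral_3_eq_3)
  have C2: "continuous_on {a..b} (d 2)" using D2 by (rule DERIV_continuous_on)
  have C1: "continuous_on {a..b} (d 1)" using D1 by (rule DERIV_continuous_on)
  have C3': "continuous_on {a..b} (IL a g (d 3))" by (rule IL_cont[OF C])
  have e0: "\<And>y. y \<in> {a..b} \<Longrightarrow> IL a g (d 0) y = d 0 y - d 0 a * exp (-g*(y-a)) - IL a g (d 1) y / g" by (rule IL_ibp[OF g D0 C1])
  have e1: "\<And>y. y \<in> {a..b} \<Longrightarrow> IL a g (d 1) y = d 1 y - d 1 a * exp (-g*(y-a)) - IL a g (d 2) y / g" by (rule IL_ibp[OF g D1 C2])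
  have e2: "\<And>y. y \<in> {a..b} \<Longrightarrow> IL a g (d 2) y = d 2 y - d 2 a * exp (-g*(y-a)) - IL a g (d 3) y / g" by (rule IL_ibp[OF g D2 C])
  have P2: "phiL a g 2 d 2 y = (1/g) * d 1 y + (-1/g^2) * d 2 y + (1/g^3) * IL a g (d 3) y" if y: "y \<in> {a..b}" for y
  proof -
    have "phiL a g 2 d 2 y = DL a g (d 1 a / g) (d 0) y - (\<Sum>m=2..2. (-1/g)^m * d m a * exp (-g*(y-a)))"
      by (simp add: phiL_def)
    also have "\<dots> = (1/g) * d 1 y + (-1/g^2) * d 2 y + (1/g^3) * IL a g (d 3) y"
      unfolding DL_def e0[OF y] e1[OF y] e2[OF y] using g by (simp add: set22 field_simps power2_eq_square power3_eq_cube)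
    finally show ?thesis .
  qed
  have P2a: "phiL a g 2 d 2 a = (1/g) * d 1 a + (-1/g^2) * d 2 a"
    using P2[of a] ab by (simp add: IL_at_a)
  have IP2: "IL a g (phiL a g 2 d 2) x = (1/g) * IL a g (d 1) x + (-1/g^2) * IL a g (d 2) x + (1/g^3) * IL a g (IL a g (d 3)) x"
  proof -
    have "IL a g (phiL a g 2 d 2) x = IL a g (\<lambda>y. (1/g) * d 1 y + (-1/g^2) * d 2 y + (1/g^3) * IL a g (d 3) y) x"
      by (rule IL_cong) (use P2 x in auto)
    also have "\<dots> = (1/g) * IL a g (d 1) x + (-1/g^2) * IL a g (d 2) x + (1/g^3) * IL a g (IL a g (d 3)) x"
      by (rule IL_lin3[OF C1 C2 C3' x])
    finally show ?thesis .
  qed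
  have "PL a b g 2 d x = g * DL a g (d 1 a / g) (d 0) x + g * DL a g 0 (phiL a g 2 d 2) x"
    by (simp add: PL_def set22 phiL_1)
  also have "\<dots> = d 1 x - IL a g (IL a g (d 3)) x / g^2"
    unfolding DL_def P2[OF x] P2a IP2 e0[OF x] e1[OF x] e2[OF x] using g
    by (simp add: field_simps power2_eq_square power3_eq_cube)
  finally have "d 1 x - PL a b g 2 d x = IL a g (IL a g (d 3)) x / g^2" by simp
  moreover have "\<bar>IL a g (IL a g (d 3)) x\<bar> \<le> M"
    by (rule IL_bound1[OF g C3' _ x]) (rule IL_bound1[OF g C M])
  moreover have "0 \<le> M" using M[of a] ab by auto
  ultimately show ?thesis using g by (simp add: abs_div divide_right_mono power_one_over)
qed


lemma D0_cong:
  assumes "\<And>y. y \<in> {a..b} \<Longrightarrow> u y = v y" "x \<in> {a..b}" "a \<le> b"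
  shows "D0 a b g ca cb u x = D0 a b g ca cb v x"
proof -
  have "I0 a b g u z = I0 a b g v z" for z
    unfolding I0_def using assms(1) by (metis (no_types, lifting) integral_cong)
  moreover have "u x = v x" "u a = v a" "u b = v b" using assms by auto
  ultimately show ?thesis unfolding D0_def by simp
qed

lemma L3:
  fixes d :: "nat \<Rightarrow> real \<Rightarrow> real"
  assumes g: "g > 0" and ab: "a < b" and x: "x \<in> {a..b}"
    and D: "\<And>j y. j < 4 \<Longrightarrow> y \<in> {a..b} \<Longrightarrow> (d j has_real_derivative d (Suc j) y) (at y within {a..b})"
    and C: "continuous_on {a..b} (d 4)"
    and M: "\<And>y. y \<in> {a..b} \<Longrightarrow> \<bar>d 4 y\<bar> \<le> M"
  shows "\<bar>d 1 x - PL a b g 3 d x\<bar> \<le> 3 * (1/g)^3 * M"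
proof -
  have D0: "\<And>y. y \<in> {a..b} \<Longrightarrow> (d 0 has_real_derivative d 1 y) (at y within {a..b})" using D[of 0] by simp
  have D1: "\<And>y. y \<in> {a..b} \<Longrightarrow> (d 1 has_real_derivative d 2 y) (at y within {a..b})" using D[of 1] by (simp add: numeral_2_eq_2)
  have D2: "\<And>y. y \<in> {a..b} \<Longrightarrow> (d 2 has_real_derivative d 3 y) (at y within {a..b})" using D[of 2] by (simp add: numeral_3_eq_3)
  have D3: "\<And>y. y \<in> {a..b} \<Longrightarrow> (d 3 has_real_derivative d 4 y) (at y within {a..b})" using D[of 3] by (simp add: eval_nat_numeral)
  have C3: "continuous_on {a..b} (d 3)" using D3 by (rule DERIV_continuous_on)
  have C2: "continuous_on {a..b} (d 2)" using D2 by (rule DERIV_continuous_on)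
  have C1: "continuous_on {a..b} (d 1)" using D1 by (rule DERIV_continuous_on)
  have C4': "continuous_on {a..b} (IL a g (d 4))" by (rule IL_cont[OF C])
  have C4'': "continuous_on {a..b} (IL a g (IL a g (d 4)))" by (rule IL_cont[OF C4'])
  have e0: "\<And>y. y \<in> {a..b} \<Longrightarrow> IL a g (d 0) y = d 0 y - d 0 a * exp (-g*(y-a)) - IL a g (d 1) y / g" by (rule IL_ibp[OF g D0 C1])
  have e1: "\<And>y. y \<in> {a..b} \<Longrightarrow> IL a g (d 1) y = d 1 y - d 1 a * exp (-g*(y-a)) - IL a g (d 2) y / g" by (rule IL_ibp[OF g D1 C2])
  have e2: "\<And>y. y \<in> {a..b} \<Longrightarrow> IL a g (d 2) y = d 2 y - d 2 a * exp (-g*(y-a)) - IL a g (d 3) y / g" by (rule IL_ibp[OF g D2 C3])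
  have e3: "\<And>y. y \<in> {a..b} \<Longrightarrow> IL a g (d 3) y = d 3 y - d 3 a * exp (-g*(y-a)) - IL a g (d 4) y / g" by (rule IL_ibp[OF g D3 C])
  define q where "q = (\<lambda>y. DL a g (d 1 a / g) (d 0) y - (\<Sum>m=2..3. (-1/g)^m * d m a * exp (-g*(y-a))))"
  have ph2: "phiL a g 3 d 2 = q" unfolding q_def by (simp add: phiL_def)
  have ph3: "phiL a g 3 d 3 = (\<lambda>x. DL a g 0 q x + (\<Sum>m=2..3. (real m - 1) * (-1/g)^m * d m a * exp (-g*(x-a))))"
    unfolding q_def by (simp add: phiL_def)
  have P2: "q y = (1/g) * d 1 y + (-1/g^2) * d 2 y + (1/g^3) * d 3 y + (-1/g^4) * IL a g (d 4) y" if y: "y \<in> {a..b}" for y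
    unfolding q_def DL_def e0[OF y] e1[OF y] e2[OF y] e3[OF y] using g
    by (simp add: set23 field_simps power2_eq_square power3_eq_cube power4_eq_xxxx)
  have P2a: "q a = (1/g) * d 1 a + (-1/g^2) * d 2 a + (1/g^3) * d 3 a"
    using P2[of a] ab by (simp add: IL_at_a)
  have IP2: "IL a g q y = (1/g) * IL a g (d 1) y + (-1/g^2) * IL a g (d 2) y + (1/g^3) * IL a g (d 3) y + (-1/g^4) * IL a g (IL a g (d 4)) y"
    if y: "y \<in> {a..b}" for y
  proof -
    have "IL a g q y = IL a g (\<lambda>y. (1/g) * d 1 y + (-1/g^2) * d 2 y + (1/g^3) * d 3 y + (-1/g^4) * IL a g (d 4) y) y"
      by (rule IL_cong) (use P2 y in auto)
    also have "\<dots> = (1/g) * IL a g (d 1) y + (-1/g^2) * IL a g (d 2) y + (1/g^3) * IL a g (d 3) y + (-1/g^4) * IL a g (IL a g (d 4)) y"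
      by (rule IL_lin4[OF C1 C2 C3 C4' y])
    finally show ?thesis .
  qed
  have P3: "phiL a g 3 d 3 y = (1/g^2) * d 2 y + (-2/g^3) * d 3 y + (2/g^4) * IL a g (d 4) y + (1/g^4) * IL a g (IL a g (d 4)) y"
    if y: "y \<in> {a..b}" for y
    unfolding ph3 DL_def P2[OF y] P2a IP2[OF y] e1[OF y] e2[OF y] e3[OF y] using g
    by (simp add: set23 field_simps power2_eq_square power3_eq_cube power4_eq_xxxx)
  have P3a: "phiL a g 3 d 3 a = (1/g^2) * d 2 a + (-2/g^3) * d 3 a"
    using P3[of a] ab by (simp add: IL_at_a)
  have IP3: "IL a g (phiL a g 3 d 3) x = (1/g^2) * IL a g (d 2) x + (-2/g^3) * IL a g (d 3) x + (2/g^4) * IL a g (IL a g (d 4)) x + (1/g^4) * IL a g (IL a g (IL a g (d 4))) x"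
  proof -
    have "IL a g (phiL a g 3 d 3) x = IL a g (\<lambda>y. (1/g^2) * d 2 y + (-2/g^3) * d 3 y + (2/g^4) * IL a g (d 4) y + (1/g^4) * IL a g (IL a g (d 4)) y) x"
      by (rule IL_cong) (use P3 x in auto)
    also have "\<dots> = (1/g^2) * IL a g (d 2) x + (-2/g^3) * IL a g (d 3) x + (2/g^4) * IL a g (IL a g (d 4)) x + (1/g^4) * IL a g (IL a g (IL a g (d 4))) x"
      by (rule IL_lin4[OF C2 C3 C4' C4'' x])
    finally show ?thesis .
  qed
  have "PL a b g 3 d x = g * DL a g (d 1 a / g) (d 0) x + g * (DL a g 0 q x + DL a g 0 (phiL a g 3 d 3) x)
      - g * D0 a b g 0 0 (phiL a g 3 d 3) x"
    by (simp add: PL_def set23 phiL_1 ph2)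
  also have "\<dots> = d 1 x - IL a g (IL a g (IL a g (d 4))) x / g^3 - g * D0 a b g 0 0 (phiL a g 3 d 3) x"
    unfolding DL_def P2[OF x] P2a IP2[OF x] P3[OF x] P3a IP3 e0[OF x] e1[OF x] e2[OF x] e3[OF x] using g
    by (simp add: set23 field_simps power2_eq_square power3_eq_cube power4_eq_xxxx)
  finally have err: "d 1 x - PL a b g 3 d x = IL a g (IL a g (IL a g (d 4))) x / g^3 + g * D0 a b g 0 0 (phiL a g 3 d 3) x"
    by simp
  have M0: "0 \<le> M" using M[of a] ab by auto
  have b1: "\<bar>IL a g (d 4) y\<bar> \<le> M" if "y \<in> {a..b}" for y by (rule IL_bound1[OF g C M that])
  have b2: "\<bar>IL a g (IL a g (d 4)) y\<bar> \<le> M" if "y \<in> {a..b}" for y by (rule IL_bound1[OF g C4' b1 that])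
  have b3: "\<bar>IL a g (IL a g (IL a g (d 4))) x\<bar> \<le> M" by (rule IL_bound1[OF g C4'' b2 x])
  define v where "v = (\<lambda>y. (1/g^2) * d 2 y + (-2/g^3) * d 3 y + (2/g^4) * IL a g (d 4) y + (1/g^4) * IL a g (IL a g (d 4)) y)"
  define v1 where "v1 = (\<lambda>y. (1/g^2) * d 3 y - (1/g^3) * (IL a g (d 4) y + IL a g (IL a g (d 4)) y))"
  define v2 where "v2 = (\<lambda>y. IL a g (IL a g (d 4)) y / g^2)"
  have dv: "(v has_real_derivative v1 y) (at y within {a..b})" if y: "y \<in> {a..b}" for y
  proof -
    have "(v has_real_derivative (1/g^2) * d 3 y + (-2/g^3) * d 4 y + (2/g^4) * (g * (d 4 y - IL a g (d 4) y))
        + (1/g^4) * (g * (IL a g (d 4) y - IL a g (IL a g (d 4)) y))) (at y within {a..b})"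
      unfolding v_def
      by (intro DERIV_add DERIV_cmult D2[OF y] D3[OF y] IL_deriv[OF C y] IL_deriv[OF C4' y])
    moreover have "(1/g^2) * d 3 y + (-2/g^3) * d 4 y + (2/g^4) * (g * (d 4 y - IL a g (d 4) y))
        + (1/g^4) * (g * (IL a g (d 4) y - IL a g (IL a g (d 4)) y)) = v1 y"
      unfolding v1_def using g by (simp add: field_simps power2_eq_square power3_eq_cube power4_eq_xxxx)
    ultimately show ?thesis by simp
  qed
  have dv1: "(v1 has_real_derivative v2 y) (at y within {a..b})" if y: "y \<in> {a..b}" for y
  proof -
    have "(v1 has_real_derivative (1/g^2) * d 4 y - (1/g^3) * (g * (d 4 y - IL a g (d 4) y)
        + g * (IL a g (d 4) y - IL a g (IL a g (d 4)) y))) (at y within {a..b})"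
      unfolding v1_def
      by (intro DERIV_add DERIV_diff DERIV_cmult D3[OF y] IL_deriv[OF C y] IL_deriv[OF C4' y])
    moreover have "(1/g^2) * d 4 y - (1/g^3) * (g * (d 4 y - IL a g (d 4) y)
        + g * (IL a g (d 4) y - IL a g (IL a g (d 4)) y)) = v2 y"
      unfolding v2_def using g by (simp add: field_simps power2_eq_square power3_eq_cube)
    ultimately show ?thesis by simp
  qed
  have cv2: "continuous_on {a..b} v2" unfolding v2_def using g by (auto intro!: continuous_intros C4'')
  have bv2: "\<bar>v2 y\<bar> \<le> M / g^2" if "y \<in> {a..b}" for y
    unfolding v2_def using b2[OF that] g by (simp add: abs_div divide_right_mono)
  have "D0 a b g 0 0 (phiL a g 3 d 3) x = D0 a b g 0 0 v x"
    by (rule D0_cong) (use P3 x ab in \<open>auto simp: v_def\<close>)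
  moreover have "\<bar>D0 a b g 0 0 v x\<bar> \<le> 2 * (M / g^2) / g^2"
    by (rule D0_bound[OF g ab dv dv1 cv2 bv2 x])
  ultimately have bD: "\<bar>g * D0 a b g 0 0 (phiL a g 3 d 3) x\<bar> \<le> 2 * M / g^3"
    using g by (simp add: abs_mult field_simps power2_eq_square power3_eq_cube)
  have "\<bar>IL a g (IL a g (IL a g (d 4))) x / g^3\<bar> \<le> M / g^3"
    using b3 g by (simp add: abs_div divide_right_mono)
  then have "\<bar>d 1 x - PL a b g 3 d x\<bar> \<le> 3 * M / g^3" unfolding err using bD by linarith
  then show ?thesis by (simp add: power_one_over)
qed



lemma R1:
  fixes d :: "nat \<Rightarrow> real \<Rightarrow> real"
  assumes g: "g > 0" and ab: "a < b" and x: "x \<in> {a..b}"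
    and D: "\<And>j y. j < 2 \<Longrightarrow> y \<in> {a..b} \<Longrightarrow> (d j has_real_derivative d (Suc j) y) (at y within {a..b})"
    and C: "continuous_on {a..b} (d 2)"
    and M: "\<And>y. y \<in> {a..b} \<Longrightarrow> \<bar>d 2 y\<bar> \<le> M"
  shows "\<bar>d 1 x - PR a b g 1 d x\<bar> \<le> 3 * (1/g)^1 * M"
proof -
  have D0: "\<And>y. y \<in> {a..b} \<Longrightarrow> (d 0 has_real_derivative d 1 y) (at y within {a..b})" using D[of 0] by simp
  have D1: "\<And>y. y \<in> {a..b} \<Longrightarrow> (d 1 has_real_derivative d 2 y) (at y within {a..b})" using D[of 1] by (simp add: numeral_2_eq_2)
  have C1: "continuous_on {a..b} (d 1)" using D1 by (rule DERIV_continuous_on)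
  have e0: "IR b g (d 0) x = d 0 x - d 0 b * exp (-g*(b-x)) + IR b g (d 1) x / g" by (rule IR_ibp[OF g D0 C1 x])
  have e1: "IR b g (d 1) x = d 1 x - d 1 b * exp (-g*(b-x)) + IR b g (d 2) x / g" by (rule IR_ibp[OF g D1 C x])
  have "PR a b g 1 d x = - g * DR b g (- d 1 b / g) (d 0) x"
    by (simp add: PR_def phiR_def)
  also have "\<dots> = d 1 x + IR b g (d 2) x / g"
    unfolding DR_def e0 e1 using g by (simp add: field_simps)
  finally have "d 1 x - PR a b g 1 d x = - (IR b g (d 2) x / g)" by simp
  moreover have "\<bar>IR b g (d 2) x\<bar> \<le> M" by (rule IR_bound1[OF g C M x])
  moreover have "0 \<le> M" using M[of a] ab by auto
  ultimately show ?thesis using g by (simp add: abs_div divide_right_mono)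
qed



lemma R2:
  fixes d :: "nat \<Rightarrow> real \<Rightarrow> real"
  assumes g: "g > 0" and ab: "a < b" and x: "x \<in> {a..b}"
    and D: "\<And>j y. j < 3 \<Longrightarrow> y \<in> {a..b} \<Longrightarrow> (d j has_real_derivative d (Suc j) y) (at y within {a..b})"
    and C: "continuous_on {a..b} (d 3)"
    and M: "\<And>y. y \<in> {a..b} \<Longrightarrow> \<bar>d 3 y\<bar> \<le> M"
  shows "\<bar>d 1 x - PR a b g 2 d x\<bar> \<le> 3 * (1/g)^2 * M"
proof -
  have D0: "\<And>y. y \<in> {a..b} \<Longrightarrow> (d 0 has_real_derivative d 1 y) (at y within {a..b})" using D[of 0] by simp
  have D1: "\<And>y. y \<in> {a..b} \<Longrightarrow> (d 1 has_real_derivative d 2 y) (at y within {a..b})" using D[of 1] by (simp add: numeral_2_eq_2)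
  have D2: "\<And>y. y \<in> {a..b} \<Longrightarrow> (d 2 has_real_derivative d 3 y) (at y within {a..b})" using D[of 2] by (simp add: numeral_3_eq_3)
  have C2: "continuous_on {a..b} (d 2)" using D2 by (rule DERIV_continuous_on)
  have C1: "continuous_on {a..b} (d 1)" using D1 by (rule DERIV_continuous_on)
  have C3': "continuous_on {a..b} (IR b g (d 3))" by (rule IR_cont[OF C])
  have e0: "\<And>y. y \<in> {a..b} \<Longrightarrow> IR b g (d 0) y = d 0 y - d 0 b * exp (-g*(b-y)) + IR b g (d 1) y / g" by (rule IR_ibp[OF g D0 C1])
  have e1: "\<And>y. y \<in> {a..b} \<Longrightarrow> IR b g (d 1) y = d 1 y - d 1 b * exp (-g*(b-y)) + IR b g (d 2) y / g" by (rule IR_ibp[OF g D1 C2])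
  have e2: "\<And>y. y \<in> {a..b} \<Longrightarrow> IR b g (d 2) y = d 2 y - d 2 b * exp (-g*(b-y)) + IR b g (d 3) y / g" by (rule IR_ibp[OF g D2 C])
  have P2: "phiR b g 2 d 2 y = (-1/g) * d 1 y + (-1/g^2) * d 2 y + (-1/g^3) * IR b g (d 3) y" if y: "y \<in> {a..b}" for y
  proof -
    have "phiR b g 2 d 2 y = DR b g (- d 1 b / g) (d 0) y - (\<Sum>m=2..2. (1/g)^m * d m b * exp (-g*(b-y)))"
      by (simp add: phiR_def)
    also have "\<dots> = (-1/g) * d 1 y + (-1/g^2) * d 2 y + (-1/g^3) * IR b g (d 3) y"
      unfolding DR_def e0[OF y] e1[OF y] e2[OF y] using g by (simp add: set22 field_simps power2_eq_square power3_eq_cube)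
    finally show ?thesis .
  qed
  have P2a: "phiR b g 2 d 2 b = (-1/g) * d 1 b + (-1/g^2) * d 2 b"
    using P2[of b] ab by (simp add: IR_at_b)
  have IP2: "IR b g (phiR b g 2 d 2) x = (-1/g) * IR b g (d 1) x + (-1/g^2) * IR b g (d 2) x + (-1/g^3) * IR b g (IR b g (d 3)) x"
  proof -
    have "IR b g (phiR b g 2 d 2) x = IR b g (\<lambda>y. (-1/g) * d 1 y + (-1/g^2) * d 2 y + (-1/g^3) * IR b g (d 3) y) x"
      by (rule IR_cong) (use P2 x in auto)
    also have "\<dots> = (-1/g) * IR b g (d 1) x + (-1/g^2) * IR b g (d 2) x + (-1/g^3) * IR b g (IR b g (d 3)) x"
      by (rule IR_lin3[OF C1 C2 C3' x])
    finally show ?thesis .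
  qed
  have "PR a b g 2 d x = - g * DR b g (- d 1 b / g) (d 0) x - g * DR b g 0 (phiR b g 2 d 2) x"
    by (simp add: PR_def set22 phiR_1)
  also have "\<dots> = d 1 x - IR b g (IR b g (d 3)) x / g^2"
    unfolding DR_def P2[OF x] P2a IP2 e0[OF x] e1[OF x] e2[OF x] using g
    by (simp add: field_simps power2_eq_square power3_eq_cube)
  finally have "d 1 x - PR a b g 2 d x = IR b g (IR b g (d 3)) x / g^2" by simp
  moreover have "\<bar>IR b g (IR b g (d 3)) x\<bar> \<le> M"
    by (rule IR_bound1[OF g C3' _ x]) (rule IR_bound1[OF g C M])
  moreover have "0 \<le> M" using M[of a] ab by auto
  ultimately show ?thesis using g by (simp add: abs_div divide_right_mono power_one_over)
qed


lemma R3: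
  fixes d :: "nat \<Rightarrow> real \<Rightarrow> real"
  assumes g: "g > 0" and ab: "a < b" and x: "x \<in> {a..b}"
    and D: "\<And>j y. j < 4 \<Longrightarrow> y \<in> {a..b} \<Longrightarrow> (d j has_real_derivative d (Suc j) y) (at y within {a..b})"
    and C: "continuous_on {a..b} (d 4)"
    and M: "\<And>y. y \<in> {a..b} \<Longrightarrow> \<bar>d 4 y\<bar> \<le> M"
  shows "\<bar>d 1 x - PR a b g 3 d x\<bar> \<le> 3 * (1/g)^3 * M"
proof -
  have D0: "\<And>y. y \<in> {a..b} \<Longrightarrow> (d 0 has_real_derivative d 1 y) (at y within {a..b})" using D[of 0] by simp
  have D1: "\<And>y. y \<in> {a..b} \<Longrightarrow> (d 1 has_real_derivative d 2 y) (at y within {a..b})" using D[of 1] by (simp add: numeral_2_eq_2)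
  have D2: "\<And>y. y \<in> {a..b} \<Longrightarrow> (d 2 has_real_derivative d 3 y) (at y within {a..b})" using D[of 2] by (simp add: numeral_3_eq_3)
  have D3: "\<And>y. y \<in> {a..b} \<Longrightarrow> (d 3 has_real_derivative d 4 y) (at y within {a..b})" using D[of 3] by (simp add: eval_nat_numeral)
  have C3: "continuous_on {a..b} (d 3)" using D3 by (rule DERIV_continuous_on)
  have C2: "continuous_on {a..b} (d 2)" using D2 by (rule DERIV_continuous_on)
  have C1: "continuous_on {a..b} (d 1)" using D1 by (rule DERIV_continuous_on)
  have C4': "continuous_on {a..b} (IR b g (d 4))" by (rule IR_cont[OF C])
  have C4'': "continuous_on {a..b} (IR b g (IR b g (d 4)))" by (rule IR_cont[OF C4'])
  have e0: "\<And>y. y \<in> {a..b} \<Longrightarrow> IR b g (d 0) y = d 0 y - d 0 b * exp (-g*(b-y)) + IR b g (d 1) y / g" by (rule IR_ibp[OF g D0 C1])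
  have e1: "\<And>y. y \<in> {a..b} \<Longrightarrow> IR b g (d 1) y = d 1 y - d 1 b * exp (-g*(b-y)) + IR b g (d 2) y / g" by (rule IR_ibp[OF g D1 C2])
  have e2: "\<And>y. y \<in> {a..b} \<Longrightarrow> IR b g (d 2) y = d 2 y - d 2 b * exp (-g*(b-y)) + IR b g (d 3) y / g" by (rule IR_ibp[OF g D2 C3])
  have e3: "\<And>y. y \<in> {a..b} \<Longrightarrow> IR b g (d 3) y = d 3 y - d 3 b * exp (-g*(b-y)) + IR b g (d 4) y / g" by (rule IR_ibp[OF g D3 C])
  define q where "q = (\<lambda>y. DR b g (- d 1 b / g) (d 0) y - (\<Sum>m=2..3. (1/g)^m * d m b * exp (-g*(b-y))))"
  have ph2: "phiR b g 3 d 2 = q" unfolding q_def by (simp add: phiR_def)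
  have ph3: "phiR b g 3 d 3 = (\<lambda>x. DR b g 0 q x + (\<Sum>m=2..3. (real m - 1) * (1/g)^m * d m b * exp (-g*(b-x))))"
    unfolding q_def by (simp add: phiR_def)
  have P2: "q y = (-1/g) * d 1 y + (-1/g^2) * d 2 y + (-1/g^3) * d 3 y + (-1/g^4) * IR b g (d 4) y" if y: "y \<in> {a..b}" for y
    unfolding q_def DR_def e0[OF y] e1[OF y] e2[OF y] e3[OF y] using g
    by (simp add: set23 field_simps power2_eq_square power3_eq_cube power4_eq_xxxx)
  have P2a: "q b = (-1/g) * d 1 b + (-1/g^2) * d 2 b + (-1/g^3) * d 3 b"
    using P2[of b] ab by (simp add: IR_at_b)
  have IP2: "IR b g q y = (-1/g) * IR b g (d 1) y + (-1/g^2) * IR b g (d 2) y + (-1/g^3) * IR b g (d 3) y + (-1/g^4) * IR b g (IR b g (d 4)) y"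
    if y: "y \<in> {a..b}" for y
  proof -
    have "IR b g q y = IR b g (\<lambda>y. (-1/g) * d 1 y + (-1/g^2) * d 2 y + (-1/g^3) * d 3 y + (-1/g^4) * IR b g (d 4) y) y"
      by (rule IR_cong) (use P2 y in auto)
    also have "\<dots> = (-1/g) * IR b g (d 1) y + (-1/g^2) * IR b g (d 2) y + (-1/g^3) * IR b g (d 3) y + (-1/g^4) * IR b g (IR b g (d 4)) y"
      by (rule IR_lin4[OF C1 C2 C3 C4' y])
    finally show ?thesis .
  qed
  have P3: "phiR b g 3 d 3 y = (1/g^2) * d 2 y + (2/g^3) * d 3 y + (2/g^4) * IR b g (d 4) y + (1/g^4) * IR b g (IR b g (d 4)) y"
    if y: "y \<in> {a..b}" for y
    unfolding ph3 DR_def P2[OF y] P2a IP2[OF y] e1[OF y] e2[OF y] e3[OF y] using g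
    by (simp add: set23 field_simps power2_eq_square power3_eq_cube power4_eq_xxxx)
  have P3a: "phiR b g 3 d 3 b = (1/g^2) * d 2 b + (2/g^3) * d 3 b"
    using P3[of b] ab by (simp add: IR_at_b)
  have IP3: "IR b g (phiR b g 3 d 3) x = (1/g^2) * IR b g (d 2) x + (2/g^3) * IR b g (d 3) x + (2/g^4) * IR b g (IR b g (d 4)) x + (1/g^4) * IR b g (IR b g (IR b g (d 4))) x"
  proof -
    have "IR b g (phiR b g 3 d 3) x = IR b g (\<lambda>y. (1/g^2) * d 2 y + (2/g^3) * d 3 y + (2/g^4) * IR b g (d 4) y + (1/g^4) * IR b g (IR b g (d 4)) y) x"
      by (rule IR_cong) (use P3 x in auto)
    also have "\<dots> = (1/g^2) * IR b g (d 2) x + (2/g^3) * IR b g (d 3) x + (2/g^4) * IR b g (IR b g (d 4)) x + (1/g^4) * IR b g (IR b g (IR b g (d 4))) x"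
      by (rule IR_lin4[OF C2 C3 C4' C4'' x])
    finally show ?thesis .
  qed
  have "PR a b g 3 d x = - g * DR b g (- d 1 b / g) (d 0) x - g * (DR b g 0 q x + DR b g 0 (phiR b g 3 d 3) x)
      + g * D0 a b g 0 0 (phiR b g 3 d 3) x"
    by (simp add: PR_def set23 phiR_1 ph2)
  also have "\<dots> = d 1 x + IR b g (IR b g (IR b g (d 4))) x / g^3 + g * D0 a b g 0 0 (phiR b g 3 d 3) x"
    unfolding DR_def P2[OF x] P2a IP2[OF x] P3[OF x] P3a IP3 e0[OF x] e1[OF x] e2[OF x] e3[OF x] using g
    by (simp add: set23 field_simps power2_eq_square power3_eq_cube power4_eq_xxxx)
  finally have err: "d 1 x - PR a b g 3 d x = - (IR b g (IR b g (IR b g (d 4))) x / g^3) - g * D0 a b g 0 0 (phiR b g 3 d 3) x"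
    by simp
  have M0: "0 \<le> M" using M[of a] ab by auto
  have b1: "\<bar>IR b g (d 4) y\<bar> \<le> M" if "y \<in> {a..b}" for y by (rule IR_bound1[OF g C M that])
  have b2: "\<bar>IR b g (IR b g (d 4)) y\<bar> \<le> M" if "y \<in> {a..b}" for y by (rule IR_bound1[OF g C4' b1 that])
  have b3: "\<bar>IR b g (IR b g (IR b g (d 4))) x\<bar> \<le> M" by (rule IR_bound1[OF g C4'' b2 x])
  define v where "v = (\<lambda>y. (1/g^2) * d 2 y + (2/g^3) * d 3 y + (2/g^4) * IR b g (d 4) y + (1/g^4) * IR b g (IR b g (d 4)) y)"
  define v1 where "v1 = (\<lambda>y. (1/g^2) * d 3 y + (1/g^3) * (IR b g (d 4) y + IR b g (IR b g (d 4)) y))"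
  define v2 where "v2 = (\<lambda>y. IR b g (IR b g (d 4)) y / g^2)"
  have dv: "(v has_real_derivative v1 y) (at y within {a..b})" if y: "y \<in> {a..b}" for y
  proof -
    have "(v has_real_derivative (1/g^2) * d 3 y + (2/g^3) * d 4 y + (2/g^4) * (g * (IR b g (d 4) y - d 4 y))
        + (1/g^4) * (g * (IR b g (IR b g (d 4)) y - IR b g (d 4) y))) (at y within {a..b})"
      unfolding v_def
      by (intro DERIV_add DERIV_cmult D2[OF y] D3[OF y] IR_deriv[OF C y] IR_deriv[OF C4' y])
    moreover have "(1/g^2) * d 3 y + (2/g^3) * d 4 y + (2/g^4) * (g * (IR b g (d 4) y - d 4 y))
        + (1/g^4) * (g * (IR b g (IR b g (d 4)) y - IR b g (d 4) y)) = v1 y"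
      unfolding v1_def using g by (simp add: field_simps power2_eq_square power3_eq_cube power4_eq_xxxx)
    ultimately show ?thesis by simp
  qed
  have dv1: "(v1 has_real_derivative v2 y) (at y within {a..b})" if y: "y \<in> {a..b}" for y
  proof -
    have "(v1 has_real_derivative (1/g^2) * d 4 y + (1/g^3) * (g * (IR b g (d 4) y - d 4 y)
        + g * (IR b g (IR b g (d 4)) y - IR b g (d 4) y))) (at y within {a..b})"
      unfolding v1_def
      by (intro DERIV_add DERIV_diff DERIV_cmult D3[OF y] IR_deriv[OF C y] IR_deriv[OF C4' y])
    moreover have "(1/g^2) * d 4 y + (1/g^3) * (g * (IR b g (d 4) y - d 4 y)
        + g * (IR b g (IR b g (d 4)) y - IR b g (d 4) y)) = v2 y"
      unfolding v2_def using g by (simp add: field_simps power2_eq_square power3_eq_cube)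
    ultimately show ?thesis by simp
  qed
  have cv2: "continuous_on {a..b} v2" unfolding v2_def using g by (auto intro!: continuous_intros C4'')
  have bv2: "\<bar>v2 y\<bar> \<le> M / g^2" if "y \<in> {a..b}" for y
    unfolding v2_def using b2[OF that] g by (simp add: abs_div divide_right_mono)
  have "D0 a b g 0 0 (phiR b g 3 d 3) x = D0 a b g 0 0 v x"
    by (rule D0_cong) (use P3 x ab in \<open>auto simp: v_def\<close>)
  moreover have "\<bar>D0 a b g 0 0 v x\<bar> \<le> 2 * (M / g^2) / g^2"
    by (rule D0_bound[OF g ab dv dv1 cv2 bv2 x])
  ultimately have bD: "\<bar>g * D0 a b g 0 0 (phiR b g 3 d 3) x\<bar> \<le> 2 * M / g^3"
    using g by (simp add: abs_mult field_simps power2_eq_square power3_eq_cube)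
  have "\<bar>IR b g (IR b g (IR b g (d 4))) x / g^3\<bar> \<le> M / g^3"
    using b3 g by (simp add: abs_div divide_right_mono)
  then have "\<bar>d 1 x - PR a b g 3 d x\<bar> \<le> 3 * M / g^3" unfolding err using bD by linarith
  then show ?thesis by (simp add: power_one_over)
qed



theorem theorem2:
  fixes a b :: real and k :: nat
  assumes "a < b" and "k \<in> {1, 2, 3}"
  shows "\<exists>C>0. \<forall>\<gamma>>0. \<forall>d :: nat \<Rightarrow> real \<Rightarrow> real. Cn_family a b (k+1) d \<longrightarrow>
           (\<forall>x\<in>{a..b}. \<bar>d 1 x - PL a b \<gamma> k d x\<bar> \<le> C * (1/\<gamma>)^k * (SUP y\<in>{a..b}. \<bar>d (k+1) y\<bar>)) \<and>
           (\<forall>x\<in>{a..b}. \<bar>d 1 x - PR a b \<gamma> k d x\<bar> \<le> C * (1/\<gamma>)^k * (SUP y\<in>{a..b}. \<bar>d (k+1) y\<bar>))"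
proof (intro exI[of _ 3] conjI allI impI ballI)
  show "(0::real) < 3" by simp
  fix g :: real and d :: "nat \<Rightarrow> real \<Rightarrow> real" and x
  assume g: "0 < g" and cn: "Cn_family a b (k+1) d" and x: "x \<in> {a..b}"
  have D: "\<And>j y. j < k+1 \<Longrightarrow> y \<in> {a..b} \<Longrightarrow> (d j has_real_derivative d (Suc j) y) (at y within {a..b})"
    using cn unfolding Cn_family_def by auto
  have C: "continuous_on {a..b} (d (k+1))" using cn unfolding Cn_family_def by auto
  have ca: "continuous_on {a..b} (\<lambda>y. \<bar>d (k+1) y\<bar>)" by (intro continuous_intros C)
  have "bounded ((\<lambda>y. \<bar>d (k+1) y\<bar>) ` {a..b})"
    by (rule compact_imp_bounded[OF compact_continuous_image[OF ca compact_Icc]])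
  then have bdd: "bdd_above ((\<lambda>y. \<bar>d (k+1) y\<bar>) ` {a..b})" by (rule bounded_imp_bdd_above)
  define M where "M = (SUP y\<in>{a..b}. \<bar>d (k+1) y\<bar>)"
  have M: "\<And>y. y \<in> {a..b} \<Longrightarrow> \<bar>d (k+1) y\<bar> \<le> M"
    unfolding M_def by (rule cSUP_upper[OF _ bdd])
  have "\<bar>d 1 x - PL a b g k d x\<bar> \<le> 3 * (1/g)^k * M \<and> \<bar>d 1 x - PR a b g k d x\<bar> \<le> 3 * (1/g)^k * M"
  proof -
    consider "k = 1" | "k = 2" | "k = 3" using assms(2) by auto
    then show ?thesis
    proof cases
      case 1
      have D': "\<And>j y. j < 2 \<Longrightarrow> y \<in> {a..b} \<Longrightarrow> (d j has_real_derivative d (Suc j) y) (at y within {a..b})"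
        using D 1 by (simp add: eval_nat_numeral)
      have C': "continuous_on {a..b} (d 2)" using C 1 by (simp add: eval_nat_numeral)
      have M': "\<And>y. y \<in> {a..b} \<Longrightarrow> \<bar>d 2 y\<bar> \<le> M" using M 1 by (simp add: eval_nat_numeral)
      show ?thesis using L1[OF g assms(1) x D' C' M'] R1[OF g assms(1) x D' C' M'] 1 by simp
    next
      case 2
      have D': "\<And>j y. j < 3 \<Longrightarrow> y \<in> {a..b} \<Longrightarrow> (d j has_real_derivative d (Suc j) y) (at y within {a..b})"
        using D 2 by (simp add: eval_nat_numeral)
      have C': "continuous_on {a..b} (d 3)" using C 2 by (simp add: eval_nat_numeral)
      have M': "\<And>y. y \<in> {a..b} \<Longrightarrow> \<bar>d 3 y\<bar> \<le> M" using M 2 by (simp add: eval_nat_numeral)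
      show ?thesis using L2[OF g assms(1) x D' C' M'] R2[OF g assms(1) x D' C' M'] 2 by simp
    next
      case 3
      have D': "\<And>j y. j < 4 \<Longrightarrow> y \<in> {a..b} \<Longrightarrow> (d j has_real_derivative d (Suc j) y) (at y within {a..b})"
        using D 3 by (simp add: eval_nat_numeral)
      have C': "continuous_on {a..b} (d 4)" using C 3 by (simp add: eval_nat_numeral)
      have M': "\<And>y. y \<in> {a..b} \<Longrightarrow> \<bar>d 4 y\<bar> \<le> M" using M 3 by (simp add: eval_nat_numeral)
      show ?thesis using L3[OF g assms(1) x D' C' M'] R3[OF g assms(1) x D' C' M'] 3 by simp
    qed
  qed
  then show "\<bar>d 1 x - PL a b g k d x\<bar> \<le> 3 * (1/g)^k * (SUP y\<in>{a..b}. \<bar>d (k+1) y\<bar>)"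
    and "\<bar>d 1 x - PR a b g k d x\<bar> \<le> 3 * (1/g)^k * (SUP y\<in>{a..b}. \<bar>d (k+1) y\<bar>)"
    unfolding M_def by auto
qed


end
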